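(* Let $k$ be a field of characteristic $\neq 2$ containing $\sqrt{-1}$, and let $b,\beta$ be independent indeterminates. The affine conic over $k(b,\beta)$ in the variables $a,\alpha$ given by $$a^2\beta(1-\beta^2)=\alpha^2b(1-b^2)+b\beta(b^2-\beta^2)$$ has no $k(b,\beta)$-rational point.
   Context: This conic is the generic fibre of the projection $(a,b,\alpha,\beta)\mapsto(b,\beta)$ restricted to the hypersurface $H$ birational to the Ueno–Campana threefold. *)

theory Defs
  imports "HOL-Computational_Algebra.Polynomial" "HOL-Computational_Algebra.Fraction_Field"
begin

text \<open>The rational function field k(b, beta) in two independent indeterminates is
  realised as Frac(k(b)[beta]), where k(b) = Frac(k[b]).\<close>

type_synonym 'k ratfun2 = "(('k poly) fract poly) fract"

definition var_b :: "'k::field ratfun2" where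
  "var_b = Fract [: Fract [:0, 1:] 1 :] 1"

definition var_beta :: "'k::field ratfun2" where
  "var_beta = Fract [:0, 1:] 1"

end

theory Submission
  imports Defs
begin

definition emb :: "'a::idom \<Rightarrow> 'a fract" where "emb x = Fract x 1"

lemma emb_add: "emb (x + y) = emb x + emb y" by (simp add: emb_def)
lemma emb_mult: "emb (x * y) = emb x * emb y" by (simp add: emb_def)
lemma emb_diff: "emb (x - y) = emb x - emb y" by (simp add: emb_def)
lemma emb_one: "emb 1 = 1" by (simp add: emb_def One_fract_def)
lemma emb_zero: "emb 0 = 0" by (simp add: emb_def Zero_fract_def)
lemma emb_pow: "emb (x ^ n) = emb x ^ n"
  by (induction n) (simp_all add: emb_one emb_mult)
lemma emb_eq: "emb x = emb y \<longleftrightarrow> x = y" by (simp add: emb_def eq_fract)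
lemma emb_div: "b \<noteq> 0 \<Longrightarrow> Fract a b = emb a / emb b" by (simp add: emb_def)

lemmas emb_simps = emb_add emb_mult emb_diff emb_one emb_zero emb_pow

lemma no_sqrt_cube:
  fixes s :: "'k::field poly fract"
  shows "s ^ 2 \<noteq> (Fract [:0,1:] 1) ^ 3"
proof
  assume h: "s ^ 2 = (Fract [:0,1:] 1) ^ 3"
  obtain u w where s: "s = Fract u w" and w: "w \<noteq> 0" by (cases s)
  have "Fract (u^2) (w^2) = Fract ([:0,1::'k:]^3) 1" using h s
    by (simp add: power2_eq_square power3_eq_cube)
  hence e: "u^2 = [:0,1::'k:]^3 * w^2" using w by (simp add: eq_fract)
  have u: "u \<noteq> 0" using e w by auto
  have "degree (u^2) = 2 * degree u" using u by (simp add: degree_power_eq)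
  moreover have "degree ([:0,1::'k:]^3 * w^2) = 3 + 2 * degree w"
    using w by (simp add: degree_mult_eq degree_power_eq)
  ultimately have "2 * degree u = 3 + 2 * degree w" using e by metis
  thus False by presburger
qed

lemma descent:
  fixes c :: "'f::field"
  assumes c0: "c \<noteq> 0" and c1: "1 - c^2 \<noteq> 0" and ns: "\<And>s. s^2 \<noteq> c^3"
  shows "d \<noteq> 0 \<Longrightarrow> p^2 * [:0,1:] * (1 - [:0,1:]^2) = q^2 * [:c:] * (1 - [:c:]^2)
          + [:c:] * [:0,1:] * ([:c:]^2 - [:0,1:]^2) * d^2 \<Longrightarrow> False"
proof (induction "degree d" arbitrary: p q d rule: less_induct)
  case less
  let ?X = "[:0,1::'f:]"
  have "poly q 0 ^ 2 * (c * (1 - c^2)) = 0"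
    using arg_cong[OF less.prems(2), of "\<lambda>r. poly r 0"] by (simp add: algebra_simps)
  hence "poly q 0 = 0" using c0 c1 by simp
  then obtain q1 where q: "q = ?X * q1" using poly_eq_0_iff_dvd[of q 0] by (auto elim: dvdE)
  have "?X * (p^2 * (1 - ?X^2)) = ?X * (?X * q1^2 * [:c:] * (1 - [:c:]^2) + [:c:] * ([:c:]^2 - ?X^2) * d^2)"
    using less.prems(2) unfolding q by (simp add: algebra_simps power2_eq_square)
  hence e1: "p^2 * (1 - ?X^2) = ?X * q1^2 * [:c:] * (1 - [:c:]^2) + [:c:] * ([:c:]^2 - ?X^2) * d^2"
    by (rule mult_left_cancel[THEN iffD1, rotated]) simp
  have e2: "poly p 0 ^2 = c^3 * poly d 0 ^2"
    using arg_cong[OF e1, of "\<lambda>r. poly r 0"] by (simp add: algebra_simps power2_eq_square power3_eq_cube)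
  show False
  proof (cases "poly d 0 = 0")
    case False
    then have "(poly p 0 / poly d 0)^2 = c^3" using e2 by (simp add: power_divide field_simps)
    with ns show False by blast
  next
    case True
    then have "poly p 0 = 0" using e2 by simp
    then obtain p' where p: "p = ?X * p'" using poly_eq_0_iff_dvd[of p 0] by (auto elim: dvdE)
    obtain d' where d: "d = ?X * d'" using True poly_eq_0_iff_dvd[of d 0] by (auto elim: dvdE)
    have d': "d' \<noteq> 0" using less.prems(1) d by auto
    have "degree d' < degree d" using d d' by (simp add: degree_mult_eq)
    moreover have "?X^2 * (p'^2 * ?X * (1 - ?X^2)) = ?X^2 * (q1^2 * [:c:] * (1 - [:c:]^2)
          + [:c:] * ?X * ([:c:]^2 - ?X^2) * d'^2)"
      using less.prems(2) unfolding p q d by (simp add: algebra_simps power2_eq_square)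
    hence "p'^2 * ?X * (1 - ?X^2) = q1^2 * [:c:] * (1 - [:c:]^2)
          + [:c:] * ?X * ([:c:]^2 - ?X^2) * d'^2"
      by (rule mult_left_cancel[THEN iffD1, rotated]) simp
    ultimately show False using less.hyps d' by blast
  qed
qed

lemma c_facts:
  defines "c \<equiv> Fract [:0,1::'k::field:] 1"
  shows "c \<noteq> 0" "1 - c^2 \<noteq> 0" "\<And>s. s^2 \<noteq> c^3"
proof -
  have ce: "c = emb [:0,1:]" by (simp add: c_def emb_def)
  show "c \<noteq> 0" unfolding ce emb_zero[symmetric] emb_eq by simp
  have "1 - c^2 = emb (1 - [:0,1:]^2)" by (simp add: ce emb_simps)
  moreover have "(1 - [:0,1::'k:]^2) \<noteq> 0"
  proof
    assume "(1 - [:0,1::'k:]^2) = 0"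
    hence "coeff (1 - [:0,1::'k:]^2) 0 = 0" by simp
    thus False by (simp add: power2_eq_square)
  qed
  ultimately show "1 - c^2 \<noteq> 0" by (metis emb_eq emb_zero)
  show "\<And>s. s^2 \<noteq> c^3" unfolding c_def by (rule no_sqrt_cube)
qed

theorem mainTheorem8:
  fixes i :: "'k::field"
  assumes "(2::'k) \<noteq> 0"
    and "i ^ 2 = -1"
  shows "\<not> (\<exists>a \<alpha> :: 'k ratfun2.
            a ^ 2 * var_beta * (1 - var_beta ^ 2)
              = \<alpha> ^ 2 * var_b * (1 - var_b ^ 2) + var_b * var_beta * (var_b ^ 2 - var_beta ^ 2))"
proof
  assume "\<exists>a \<alpha> :: 'k ratfun2.
            a ^ 2 * var_beta * (1 - var_beta ^ 2)
              = \<alpha> ^ 2 * var_b * (1 - var_b ^ 2) + var_b * var_beta * (var_b ^ 2 - var_beta ^ 2)"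
  then obtain a \<alpha> :: "'k ratfun2" where eq: "a ^ 2 * var_beta * (1 - var_beta ^ 2)
              = \<alpha> ^ 2 * var_b * (1 - var_b ^ 2) + var_b * var_beta * (var_b ^ 2 - var_beta ^ 2)" by blast
  define c where "c = Fract [:0,1::'k:] 1"
  note cf = c_facts[folded c_def]
  obtain p1 d1 where a: "a = Fract p1 d1" and d1: "d1 \<noteq> 0" by (cases a)
  obtain q1 d2 where al: "\<alpha> = Fract q1 d2" and d2: "d2 \<noteq> 0" by (cases \<alpha>)
  define P where "P = p1 * d2"
  define Q where "Q = q1 * d1"
  define D where "D = d1 * d2"
  have D: "D \<noteq> 0" using d1 d2 by (simp add: D_def)
  have eD: "emb D \<noteq> 0" using D by (metis emb_eq emb_zero)
  have a': "a = emb P / emb D" using a d1 d2 by (simp add: P_def D_def emb_def eq_fract algebra_simps)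
  have al': "\<alpha> = emb Q / emb D" using al d1 d2 by (simp add: Q_def D_def emb_def eq_fract algebra_simps)
  have vb: "var_b = emb [:c:]" by (simp add: var_b_def emb_def c_def)
  have vbeta: "var_beta = emb [:0,1:]" by (simp add: var_beta_def emb_def)
  let ?X = "[:0,1::'k poly fract:]"
  have "emb P ^ 2 * emb ?X * (1 - emb ?X ^ 2) = emb Q ^ 2 * emb [:c:] * (1 - emb [:c:]^2)
     + emb [:c:] * emb ?X * (emb [:c:]^2 - emb ?X ^2) * emb D ^ 2"
    using eq eD unfolding a' al' vb vbeta by (simp add: field_simps)
  hence "emb (P ^ 2 * ?X * (1 - ?X ^ 2)) = emb (Q ^ 2 * [:c:] * (1 - [:c:]^2)
     + [:c:] * ?X * ([:c:]^2 - ?X ^2) * D ^ 2)" by (simp only: emb_simps)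
  hence "P ^ 2 * ?X * (1 - ?X ^ 2) = Q ^ 2 * [:c:] * (1 - [:c:]^2)
     + [:c:] * ?X * ([:c:]^2 - ?X ^2) * D ^ 2" by (simp only: emb_eq)
  thus False using descent[OF c_facts D] unfolding c_def by blast
qed

end
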